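(* Let $G$ be a group and let $(t_1,\ldots,t_n)\in G^n$ be an $n$-tuple such that $t_{i+1}=t_i^{-1}$ for some $i$. Let $H$ be the subgroup of $G$ generated by $t_1,\ldots,t_{i-1},t_{i+2},\ldots,t_n$. Then for every $h\in H$ the $n$-tuple $(t_1,\ldots,t_{i-1},ht_ih^{-1},ht_{i+1}h^{-1},t_{i+2},\ldots,t_n)$ is braid-equivalent to $(t_1,\ldots,t_n)$.
   Context: An elementary transformation (braid move) of an $n$-tuple $(t_1,\ldots,t_n)\in G^n$ is, for some $1\leq i\leq n-1$, either the replacement of $(t_i,t_{i+1})$ by $(t_it_{i+1}t_i^{-1},t_i)$ or by $(t_{i+1},t_{i+1}^{-1}t_it_{i+1})$, leaving the other entries unchanged. Two $n$-tuples are braid-equivalent if one is obtained from the other by a finite sequence of elementary transformations. *)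

theory Defs
  imports "HOL-Algebra.Algebra"
begin

text \<open>Tuples in G^n are lists of length n with entries in the carrier; positions are 0-based.\<close>

definition braid_move :: "('a, 'b) monoid_scheme \<Rightarrow> 'a list \<Rightarrow> 'a list \<Rightarrow> bool" where
  "braid_move G ts us \<longleftrightarrow> (\<exists>k. Suc k < length ts \<and>
     (us = ts[k := ts!k \<otimes>\<^bsub>G\<^esub> ts!(Suc k) \<otimes>\<^bsub>G\<^esub> inv\<^bsub>G\<^esub> (ts!k), Suc k := ts!k]
      \<or> us = ts[k := ts!(Suc k), Suc k := inv\<^bsub>G\<^esub> (ts!(Suc k)) \<otimes>\<^bsub>G\<^esub> ts!k \<otimes>\<^bsub>G\<^esub> ts!(Suc k)]))"

definition braid_equiv :: "('a, 'b) monoid_scheme \<Rightarrow> 'a list \<Rightarrow> 'a list \<Rightarrow> bool" where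
  "braid_equiv G = (braid_move G)\<^sup>*\<^sup>*"

end

theory Submission
  imports Defs
begin

context group
begin

lemma inv_cancel_helpers[simp]:
  "x \<in> carrier G \<Longrightarrow> y \<in> carrier G \<Longrightarrow> inv x \<otimes> (x \<otimes> y) = y"
  "x \<in> carrier G \<Longrightarrow> y \<in> carrier G \<Longrightarrow> x \<otimes> (inv x \<otimes> y) = y"
  by (simp_all add: m_assoc[symmetric])

lemma mv1:
  assumes "c = a \<otimes> b \<otimes> inv a"
  shows "braid_move G (A @ a # b # R) (A @ c # a # R)"
  unfolding braid_move_def
  apply (rule exI[of _ "length A"])
  using assms by (simp add: list_update_append nth_append)

lemma mv2:
  assumes "c = inv b \<otimes> a \<otimes> b"
  shows "braid_move G (A @ a # b # R) (A @ b # c # R)"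
  unfolding braid_move_def
  apply (rule exI[of _ "length A"])
  using assms by (simp add: list_update_append nth_append)

lemma move_sym:
  assumes "braid_move G ts us" "set ts \<subseteq> carrier G"
  shows "braid_move G us ts \<and> set us \<subseteq> carrier G"
proof -
  from assms(1) obtain k where k: "Suc k < length ts"
    and d: "us = ts[k := ts!k \<otimes> ts!(Suc k) \<otimes> inv (ts!k), Suc k := ts!k]
      \<or> us = ts[k := ts!(Suc k), Suc k := inv (ts!(Suc k)) \<otimes> ts!k \<otimes> ts!(Suc k)]"
    unfolding braid_move_def by blast
  have "ts!k \<in> set ts" "ts!Suc k \<in> set ts" using k by auto
  then have a: "ts!k \<in> carrier G" "ts!Suc k \<in> carrier G" using assms(2) by auto
  have len: "length us = length ts" using d by auto
  from d show ?thesis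
  proof
    assume u: "us = ts[k := ts!k \<otimes> ts!(Suc k) \<otimes> inv (ts!k), Suc k := ts!k]"
    have "braid_move G us ts"
      unfolding braid_move_def
      apply (rule exI[of _ k])
      using k a u by (auto simp: m_assoc nth_list_update intro!: disjI2 nth_equalityI)
    moreover have "set us \<subseteq> carrier G" using u a assms(2)
      by (auto dest!: set_update_subset_insert[THEN subsetD])
    ultimately show ?thesis by blast
  next
    assume u: "us = ts[k := ts!(Suc k), Suc k := inv (ts!(Suc k)) \<otimes> ts!k \<otimes> ts!(Suc k)]"
    have "braid_move G us ts"
      unfolding braid_move_def
      apply (rule exI[of _ k])
      using k a u by (auto simp: m_assoc nth_list_update intro!: disjI1 nth_equalityI)
    moreover have "set us \<subseteq> carrier G" using u a assms(2)
      by (auto dest!: set_update_subset_insert[THEN subsetD])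
    ultimately show ?thesis by blast
  qed
qed

lemma equiv_carrier:
  assumes "braid_equiv G ts us" "set ts \<subseteq> carrier G"
  shows "set us \<subseteq> carrier G"
  using assms unfolding braid_equiv_def
  by (induction rule: rtranclp_induct) (auto dest: move_sym)

lemma equiv_sym:
  assumes "braid_equiv G ts us" "set ts \<subseteq> carrier G"
  shows "braid_equiv G us ts"
  using assms unfolding braid_equiv_def
proof (induction rule: rtranclp_induct)
  case base then show ?case by simp
next
  case (step y z)
  have "set y \<subseteq> carrier G" using equiv_carrier step unfolding braid_equiv_def by blast
  then have "braid_move G z y" using move_sym step by blast
  then show ?case using step by (meson converse_rtranclp_into_rtranclp)
qed

lemma equiv_trans:
  "braid_equiv G a b \<Longrightarrow> braid_equiv G b c \<Longrightarrow> braid_equiv G a c"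
  unfolding braid_equiv_def by simp

lemma L1:
  assumes "x \<in> carrier G" "y \<in> carrier G"
  shows "braid_equiv G (A @ x # inv x # y # R) (A @ y # x # inv x # R)"
proof -
  have "braid_move G ((A @ [x]) @ inv x # y # R) ((A @ [x]) @ (inv x \<otimes> y \<otimes> x) # inv x # R)"
    by (rule mv1) (use assms in simp)
  then have 1: "braid_move G (A @ x # inv x # y # R) (A @ x # (inv x \<otimes> y \<otimes> x) # inv x # R)"
    by simp
  have 2: "braid_move G (A @ x # (inv x \<otimes> y \<otimes> x) # inv x # R) (A @ y # x # inv x # R)"
    by (rule mv1) (use assms in \<open>simp add: m_assoc\<close>)
  show ?thesis unfolding braid_equiv_def using 1 2 by (meson r_into_rtranclp rtranclp.rtrancl_into_rtrancl)
qed

lemma L2: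
  assumes "x \<in> carrier G" "y \<in> carrier G" "set A \<subseteq> carrier G" "set R \<subseteq> carrier G"
  shows "braid_equiv G (A @ x # inv x # y # R)
           (A @ (inv y \<otimes> x \<otimes> y) # inv (inv y \<otimes> x \<otimes> y) # y # R)"
proof -
  let ?z = "inv y \<otimes> x \<otimes> y"
  have "braid_move G ((A @ [x]) @ inv x # y # R) ((A @ [x]) @ y # inv ?z # R)"
    by (rule mv2) (use assms in \<open>simp add: inv_mult_group m_assoc\<close>)
  then have 1: "braid_move G (A @ x # inv x # y # R) (A @ x # y # inv ?z # R)"
    by simp
  have 2: "braid_move G (A @ x # y # inv ?z # R) (A @ y # ?z # inv ?z # R)"
    by (rule mv2) simp
  have 3: "braid_equiv G (A @ y # ?z # inv ?z # R) (A @ ?z # inv ?z # y # R)"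
    by (rule equiv_sym[OF L1]) (use assms in auto)
  show ?thesis using 1 2 3 unfolding braid_equiv_def
    by (meson r_into_rtranclp rtranclp.rtrancl_into_rtrancl rtranclp_trans)
qed

lemma L3:
  assumes "x \<in> carrier G" "set B \<subseteq> carrier G"
  shows "braid_equiv G (A @ x # inv x # B @ R) (A @ B @ x # inv x # R)"
  using assms
proof (induction B arbitrary: A)
  case Nil then show ?case unfolding braid_equiv_def by simp
next
  case (Cons b B)
  have 1: "braid_equiv G (A @ x # inv x # b # B @ R) (A @ b # x # inv x # B @ R)"
    using L1 Cons by simp
  have "braid_equiv G ((A @ [b]) @ x # inv x # B @ R) ((A @ [b]) @ B @ x # inv x # R)"
    using Cons.IH[of "A @ [b]"] Cons.prems by simp
  then have 2: "braid_equiv G (A @ b # x # inv x # B @ R) (A @ b # B @ x # inv x # R)"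
    by simp
  show ?case using equiv_trans[OF 1 2] by simp
qed

lemma P_inv:
  assumes "set A \<subseteq> carrier G" "set B \<subseteq> carrier G" "h \<in> carrier G"
    and P: "\<forall>x\<in>carrier G. braid_equiv G (A @ (h \<otimes> x \<otimes> inv h) # inv (h \<otimes> x \<otimes> inv h) # B) (A @ x # inv x # B)"
  shows "\<forall>x\<in>carrier G. braid_equiv G (A @ (inv h \<otimes> x \<otimes> inv (inv h)) # inv (inv h \<otimes> x \<otimes> inv (inv h)) # B) (A @ x # inv x # B)"
proof
  fix x assume x: "x \<in> carrier G"
  let ?x = "inv h \<otimes> x \<otimes> h"
  have "?x \<in> carrier G" using x assms by simp
  with P have "braid_equiv G (A @ (h \<otimes> ?x \<otimes> inv h) # inv (h \<otimes> ?x \<otimes> inv h) # B) (A @ ?x # inv ?x # B)"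
    by blast
  moreover have "h \<otimes> ?x \<otimes> inv h = x" using x assms by (simp add: m_assoc)
  ultimately have "braid_equiv G (A @ x # inv x # B) (A @ ?x # inv ?x # B)" by simp
  then have "braid_equiv G (A @ ?x # inv ?x # B) (A @ x # inv x # B)"
    by (rule equiv_sym) (use x assms in auto)
  then show "braid_equiv G (A @ (inv h \<otimes> x \<otimes> inv (inv h)) # inv (inv h \<otimes> x \<otimes> inv (inv h)) # B) (A @ x # inv x # B)"
    using assms by simp
qed

lemma P_mult:
  assumes "h1 \<in> carrier G" "h2 \<in> carrier G"
    and P1: "\<forall>x\<in>carrier G. braid_equiv G (A @ (h1 \<otimes> x \<otimes> inv h1) # inv (h1 \<otimes> x \<otimes> inv h1) # B) (A @ x # inv x # B)"
    and P2: "\<forall>x\<in>carrier G. braid_equiv G (A @ (h2 \<otimes> x \<otimes> inv h2) # inv (h2 \<otimes> x \<otimes> inv h2) # B) (A @ x # inv x # B)"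
  shows "\<forall>x\<in>carrier G. braid_equiv G (A @ (h1 \<otimes> h2 \<otimes> x \<otimes> inv (h1 \<otimes> h2)) # inv (h1 \<otimes> h2 \<otimes> x \<otimes> inv (h1 \<otimes> h2)) # B) (A @ x # inv x # B)"
proof
  fix x assume x: "x \<in> carrier G"
  let ?x = "h2 \<otimes> x \<otimes> inv h2"
  have "?x \<in> carrier G" using x assms by simp
  with P1 have 1: "braid_equiv G (A @ (h1 \<otimes> ?x \<otimes> inv h1) # inv (h1 \<otimes> ?x \<otimes> inv h1) # B) (A @ ?x # inv ?x # B)"
    by blast
  have e: "h1 \<otimes> ?x \<otimes> inv h1 = h1 \<otimes> h2 \<otimes> x \<otimes> inv (h1 \<otimes> h2)"
    using x assms by (simp add: m_assoc inv_mult_group)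
  show "braid_equiv G (A @ (h1 \<otimes> h2 \<otimes> x \<otimes> inv (h1 \<otimes> h2)) # inv (h1 \<otimes> h2 \<otimes> x \<otimes> inv (h1 \<otimes> h2)) # B) (A @ x # inv x # B)"
    using equiv_trans[OF 1] P2 x e by auto
qed

lemma P_gen:
  assumes "set A \<subseteq> carrier G" "set B \<subseteq> carrier G" "y \<in> set A \<union> set B"
  shows "\<forall>x\<in>carrier G. braid_equiv G (A @ (inv y \<otimes> x \<otimes> inv (inv y)) # inv (inv y \<otimes> x \<otimes> inv (inv y)) # B) (A @ x # inv x # B)"
proof
  fix x assume x: "x \<in> carrier G"
  have y: "y \<in> carrier G" using assms by auto
  let ?z = "inv y \<otimes> x \<otimes> y"
  have z: "?z \<in> carrier G" using x y by simp
  have "braid_equiv G (A @ x # inv x # B) (A @ ?z # inv ?z # B)"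
    using assms(3)
  proof
    assume "y \<in> set B"
    then obtain B1 B2 where B: "B = B1 @ y # B2" by (meson split_list)
    have 1: "braid_equiv G (A @ x # inv x # B1 @ y # B2) ((A @ B1) @ x # inv x # y # B2)"
      using L3[of x B1 A "y # B2"] x assms B by simp
    have 2: "braid_equiv G ((A @ B1) @ x # inv x # y # B2) ((A @ B1) @ ?z # inv ?z # y # B2)"
      using L2[of x y "A @ B1" B2] x y assms B by simp
    have 3: "braid_equiv G ((A @ B1) @ ?z # inv ?z # y # B2) (A @ ?z # inv ?z # B1 @ y # B2)"
      by (rule equiv_sym) (use L3[of ?z B1 A "y # B2"] z assms B in auto)
    show ?thesis using equiv_trans[OF 1 equiv_trans[OF 2 3]] B by simp
  next
    assume "y \<in> set A"
    then obtain A1 A2 where A: "A = A1 @ y # A2" by (meson split_list)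
    have "braid_equiv G ((A1 @ [y]) @ x # inv x # A2 @ B) ((A1 @ [y]) @ A2 @ x # inv x # B)"
      using L3[of x A2 "A1 @ [y]" B] x assms A by simp
    then have "braid_equiv G ((A1 @ [y]) @ A2 @ x # inv x # B) ((A1 @ [y]) @ x # inv x # A2 @ B)"
      by (rule equiv_sym) (use x assms A in auto)
    then have 1: "braid_equiv G (A1 @ y # A2 @ x # inv x # B) (A1 @ y # x # inv x # A2 @ B)"
      by simp
    have 2: "braid_equiv G (A1 @ y # x # inv x # A2 @ B) (A1 @ x # inv x # y # A2 @ B)"
      by (rule equiv_sym) (use L1[of x y A1 "A2 @ B"] x y assms A in auto)
    have 3: "braid_equiv G (A1 @ x # inv x # y # A2 @ B) (A1 @ ?z # inv ?z # y # A2 @ B)"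
      using L2[of x y A1 "A2 @ B"] x y assms A by simp
    have 4: "braid_equiv G (A1 @ ?z # inv ?z # y # A2 @ B) (A1 @ y # ?z # inv ?z # A2 @ B)"
      using L1[of ?z y A1 "A2 @ B"] z y by simp
    have "braid_equiv G ((A1 @ [y]) @ ?z # inv ?z # A2 @ B) ((A1 @ [y]) @ A2 @ ?z # inv ?z # B)"
      using L3[of ?z A2 "A1 @ [y]" B] z assms A by simp
    then have 5: "braid_equiv G (A1 @ y # ?z # inv ?z # A2 @ B) (A1 @ y # A2 @ ?z # inv ?z # B)"
      by simp
    show ?thesis using equiv_trans[OF 1 equiv_trans[OF 2 equiv_trans[OF 3 equiv_trans[OF 4 5]]]] A
      by simp
  qed
  then have "braid_equiv G (A @ ?z # inv ?z # B) (A @ x # inv x # B)"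
    by (rule equiv_sym) (use x assms in auto)
  then show "braid_equiv G (A @ (inv y \<otimes> x \<otimes> inv (inv y)) # inv (inv y \<otimes> x \<otimes> inv (inv y)) # B) (A @ x # inv x # B)"
    using y by simp
qed

lemma P_main:
  assumes "set A \<subseteq> carrier G" "set B \<subseteq> carrier G" "h \<in> generate G (set (A @ B))"
  shows "h \<in> carrier G \<and> (\<forall>x\<in>carrier G. braid_equiv G (A @ (h \<otimes> x \<otimes> inv h) # inv (h \<otimes> x \<otimes> inv h) # B) (A @ x # inv x # B))"
  using assms(3)
proof (induction rule: generate.induct)
  case one
  then show ?case by (simp add: braid_equiv_def)
next
  case (incl y)
  then have y: "y \<in> carrier G" using assms by auto
  have "\<forall>x\<in>carrier G. braid_equiv G (A @ (inv (inv y) \<otimes> x \<otimes> inv (inv (inv y))) # inv (inv (inv y) \<otimes> x \<otimes> inv (inv (inv y))) # B) (A @ x # inv x # B)"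
    by (rule P_inv) (use assms y incl P_gen[of A B y] in auto)
  then show ?case using y by simp
next
  case (inv y)
  then have y: "y \<in> carrier G" using assms by auto
  then show ?case using P_gen[of A B y] assms inv by auto
next
  case (eng h1 h2)
  then show ?case using P_mult[of h1 h2 A B] by auto
qed

end

theorem lemma1p9:
  fixes G :: "('a, 'b) monoid_scheme" and ts :: "'a list" and k :: nat and h :: 'a
  assumes "group G"
    and "set ts \<subseteq> carrier G"
    and "Suc k < length ts"
    and "ts ! (Suc k) = inv\<^bsub>G\<^esub> (ts ! k)"
    and "h \<in> generate G (set (take k ts @ drop (Suc (Suc k)) ts))"
  shows "braid_equiv G
           (ts[k := h \<otimes>\<^bsub>G\<^esub> ts!k \<otimes>\<^bsub>G\<^esub> inv\<^bsub>G\<^esub> h,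
               Suc k := h \<otimes>\<^bsub>G\<^esub> ts!(Suc k) \<otimes>\<^bsub>G\<^esub> inv\<^bsub>G\<^esub> h])
           ts"
proof -
  interpret group G by fact
  let ?A = "take k ts" and ?B = "drop (Suc (Suc k)) ts" and ?p = "ts ! k"
  have ts: "ts = ?A @ ?p # inv\<^bsub>G\<^esub> ?p # ?B"
    using assms(3,4) by (metis Cons_nth_drop_Suc Suc_lessD append_take_drop_id)
  have sA: "set ?A \<subseteq> carrier G" using assms(2) by (meson in_set_takeD subset_code(1))
  have sB: "set ?B \<subseteq> carrier G" using assms(2) by (meson in_set_dropD subset_code(1))
  have p: "?p \<in> carrier G" using assms(2,3) by auto
  have M: "h \<in> carrier G \<and> (\<forall>x\<in>carrier G. braid_equiv G (?A @ (h \<otimes>\<^bsub>G\<^esub> x \<otimes>\<^bsub>G\<^esub> inv\<^bsub>G\<^esub> h) # inv\<^bsub>G\<^esub> (h \<otimes>\<^bsub>G\<^esub> x \<otimes>\<^bsub>G\<^esub> inv\<^bsub>G\<^esub> h) # ?B) (?A @ x # inv\<^bsub>G\<^esub> x # ?B))"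
    by (rule P_main[OF sA sB assms(5)])
  then have h: "h \<in> carrier G" by blast
  have e: "h \<otimes>\<^bsub>G\<^esub> inv\<^bsub>G\<^esub> ?p \<otimes>\<^bsub>G\<^esub> inv\<^bsub>G\<^esub> h = inv\<^bsub>G\<^esub> (h \<otimes>\<^bsub>G\<^esub> ?p \<otimes>\<^bsub>G\<^esub> inv\<^bsub>G\<^esub> h)"
    using h p by (simp add: inv_mult_group m_assoc)
  have L: "ts[k := h \<otimes>\<^bsub>G\<^esub> ts!k \<otimes>\<^bsub>G\<^esub> inv\<^bsub>G\<^esub> h, Suc k := h \<otimes>\<^bsub>G\<^esub> ts!(Suc k) \<otimes>\<^bsub>G\<^esub> inv\<^bsub>G\<^esub> h]
      = ?A @ (h \<otimes>\<^bsub>G\<^esub> ?p \<otimes>\<^bsub>G\<^esub> inv\<^bsub>G\<^esub> h) # inv\<^bsub>G\<^esub> (h \<otimes>\<^bsub>G\<^esub> ?p \<otimes>\<^bsub>G\<^esub> inv\<^bsub>G\<^esub> h) # ?B"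
    apply (subst ts) apply (subst (2) ts) apply (subst (3) ts)
    using assms(3,4) e by (simp add: list_update_append nth_append min_def)
  show ?thesis unfolding L using M p ts by metis
qed

end
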